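(* Let $\Phi=\{\phi_j\}$ be a $\Phi$-sequence, $\nu$ a modulus of variation, and $1\le p<\infty$. Then $\Phi\mathrm{BV}\subseteq V_p[\nu]$ (as classes of functions on $[0,1]$) if and only if $$\limsup_{n\to\infty}\frac{1}{\nu(n)}\max_{1\le k\le n}k^{1/p}\,\Phi_k^{-1}(1)<\infty.$$
   Context: A $\Phi$-sequence is a sequence $\{\phi_j\}_{j\ge1}$ of increasing convex functions on $[0,\infty)$ with $\phi_j(0)=0$, $0<\phi_{j+1}(x)\le\phi_j(x)$ for all $j$ and $x>0$, and $\sum_j\phi_j(x)=\infty$ for $x>0$. $\Phi_n=\sum_{j=1}^n\phi_j$ and $\Phi_n^{-1}$ is its inverse function. $\mathrm{Var}_\Phi(f)=\sup\sum_{j=1}^n\phi_j(|f(I_j)|)$ over all finite collections $\{I_j\}$ of nonoverlapping subintervals of $[0,1]$, with $f(I)=f(\sup I)-f(\inf I)$; $\Phi\mathrm{BV}$ is the set of $f$ such that $\mathrm{Var}_\Phi(cf)<\infty$ for some $c>0$. A modulus of variation is a nondecreasing concave sequence of positive numbers $\nu(1),\nu(2),\dots$. $\upsilon_p(n,f)=\sup(\sum_{j=1}^n|f(I_j)|^p)^{1/p}$ over $n$ nonoverlapping subintervals of $[0,1]$, and $V_p[\nu]$ is the set of bounded $f$ on $[0,1]$ with $\sup_n\upsilon_p(n,f)/\nu(n)<\infty$. *)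

theory Defs
  imports "HOL-Analysis.Analysis" "HOL-Library.Extended_Real"
begin

text \<open>Sequences are indexed from 1; the value at index 0 is irrelevant.\<close>

definition Phi_sequence :: "(nat \<Rightarrow> real \<Rightarrow> real) \<Rightarrow> bool" where
  "Phi_sequence phi \<longleftrightarrow>
     (\<forall>j\<ge>1. mono_on {0..} (phi j) \<and> convex_on {0..} (phi j) \<and> phi j 0 = 0) \<and>
     (\<forall>j\<ge>1. \<forall>x>0. 0 < phi (Suc j) x \<and> phi (Suc j) x \<le> phi j x) \<and>
     (\<forall>j\<ge>1. \<forall>x>0. 0 < phi j x) \<and>
     (\<forall>x>0. \<not> summable (\<lambda>j. phi (Suc j) x))"

definition Phi_n :: "(nat \<Rightarrow> real \<Rightarrow> real) \<Rightarrow> nat \<Rightarrow> real \<Rightarrow> real" where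
  "Phi_n phi n x = (\<Sum>j=1..n. phi j x)"

definition Phi_n_inv :: "(nat \<Rightarrow> real \<Rightarrow> real) \<Rightarrow> nat \<Rightarrow> real \<Rightarrow> real" where
  "Phi_n_inv phi n y = (THE x. 0 \<le> x \<and> Phi_n phi n x = y)"

definition nonoverlapping :: "nat \<Rightarrow> (nat \<Rightarrow> real) \<Rightarrow> (nat \<Rightarrow> real) \<Rightarrow> bool" where
  "nonoverlapping n a b \<longleftrightarrow>
     (\<forall>j\<in>{1..n}. 0 \<le> a j \<and> a j \<le> b j \<and> b j \<le> 1) \<and>
     (\<forall>i\<in>{1..n}. \<forall>j\<in>{1..n}. i \<noteq> j \<longrightarrow> b i \<le> a j \<or> b j \<le> a i)"

definition Var_Phi :: "(nat \<Rightarrow> real \<Rightarrow> real) \<Rightarrow> (real \<Rightarrow> real) \<Rightarrow> ereal" where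
  "Var_Phi phi f = (SUP (n, a, b) \<in> {(n, a, b). nonoverlapping n a b}.
      ereal (\<Sum>j=1..n. phi j \<bar>f (b j) - f (a j)\<bar>))"

definition PhiBV :: "(nat \<Rightarrow> real \<Rightarrow> real) \<Rightarrow> (real \<Rightarrow> real) set" where
  "PhiBV phi = {f. \<exists>c>0. Var_Phi phi (\<lambda>x. c * f x) < \<infinity>}"

definition modulus_of_variation :: "(nat \<Rightarrow> real) \<Rightarrow> bool" where
  "modulus_of_variation nu \<longleftrightarrow>
     (\<forall>n\<ge>1. 0 < nu n \<and> nu n \<le> nu (Suc n)) \<and>
     (\<forall>n\<ge>1. nu (Suc (Suc n)) - nu (Suc n) \<le> nu (Suc n) - nu n)"

definition upsilon_p :: "real \<Rightarrow> nat \<Rightarrow> (real \<Rightarrow> real) \<Rightarrow> ereal" where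
  "upsilon_p p n f = (SUP (a, b) \<in> {(a, b). nonoverlapping n a b}.
      ereal ((\<Sum>j=1..n. \<bar>f (b j) - f (a j)\<bar> powr p) powr (1 / p)))"

definition V_p :: "real \<Rightarrow> (nat \<Rightarrow> real) \<Rightarrow> (real \<Rightarrow> real) set" where
  "V_p p nu = {f. bounded (f ` {0..1}) \<and>
      (SUP n\<in>{1..}. upsilon_p p n f / ereal (nu n)) < \<infinity>}"

end

theory Submission
  imports Defs "HOL-Library.Nat_Bijection"
begin

lemma bern_powr:
  fixes t p :: real
  assumes "1 \<le> p" "0 \<le> t" "t \<le> 1"
  shows "1 - t powr p \<le> p * (1 - t)"
proof (cases "t = 0")
  case True then show ?thesis using assms by simp
next
  case False
  then have tp: "t > 0" using assms by simp
  have "p * 1 powr (p - 1) * (t - 1) \<le> t powr p - 1 powr p"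
    using assms tp
    by (intro convex_on_imp_above_tangent[where A = "{0<..}", OF powr_convex])
       (auto intro!: derivative_eq_intros simp: interior_open)
  then show ?thesis by (simp add: algebra_simps)
qed

lemma PSD:
  assumes "Phi_sequence phi"
  shows PS1: "\<And>j. j \<ge> 1 \<Longrightarrow> mono_on {0..} (phi j)"
    and PS2: "\<And>j. j \<ge> 1 \<Longrightarrow> convex_on {0..} (phi j)"
    and PS3: "\<And>j. j \<ge> 1 \<Longrightarrow> phi j 0 = 0"
    and PS4: "\<And>j x. j \<ge> 1 \<Longrightarrow> x > 0 \<Longrightarrow> phi (Suc j) x \<le> phi j x"
    and PS5: "\<And>j x. j \<ge> 1 \<Longrightarrow> x > 0 \<Longrightarrow> 0 < phi j x"
    and PS6: "\<And>x. x > 0 \<Longrightarrow> \<not> summable (\<lambda>j. phi (Suc j) x)"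
  using assms unfolding Phi_sequence_def by simp_all

context
  fixes phi :: "nat \<Rightarrow> real \<Rightarrow> real"
  assumes PS: "Phi_sequence phi"
begin

lemma ps_zero: "j \<ge> 1 \<Longrightarrow> phi j 0 = 0"
  using PS3[OF PS] .

lemma ps_mono: assumes "j \<ge> 1" "0 \<le> s" "s \<le> t" shows "phi j s \<le> phi j t"
proof -
  have "mono_on {0..} (phi j)" using PS1[OF PS assms(1)] .
  then show ?thesis using assms by (auto elim!: mono_onD[of "{0..}"])
qed

lemma ps_pos: "j \<ge> 1 \<Longrightarrow> 0 < x \<Longrightarrow> 0 < phi j x"
  using PS5[OF PS] .

lemma ps_nonneg: assumes "j \<ge> 1" "0 \<le> x" shows "0 \<le> phi j x"
proof (cases "x = 0")
  case True then show ?thesis using ps_zero[OF assms(1)] by simp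
next
  case False then show ?thesis using ps_pos[OF assms(1)] assms(2) by (simp add: less_imp_le)
qed

lemma ps_Suc_le: assumes "j \<ge> 1" "0 \<le> x" shows "phi (Suc j) x \<le> phi j x"
proof (cases "x = 0")
  case True then show ?thesis using ps_zero[OF assms(1)] ps_zero[of "Suc j"] by simp
next
  case False then have "x > 0" using assms(2) by simp
  then show ?thesis using PS4[OF PS assms(1)] by simp
qed

lemma ps_dec: assumes "j \<ge> 1" "j \<le> i" "0 \<le> x" shows "phi i x \<le> phi j x"
  using assms(2)
proof (induction i rule: dec_induct)
  case base then show ?case by simp
next
  case (step i) then show ?case using ps_Suc_le[of i x] assms by simp
qed

lemma ps_cvx: "j \<ge> 1 \<Longrightarrow> 0 \<le> t \<Longrightarrow> t \<le> 1 \<Longrightarrow> 0 \<le> x \<Longrightarrow> phi j (t * x) \<le> t * phi j x"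
proof -
  assume j: "j \<ge> 1" and t: "0 \<le> t" "t \<le> 1" and x: "0 \<le> x"
  have c: "convex_on {0..} (phi j)" using PS2[OF PS j] .
  have "phi j ((1 - t) *\<^sub>R 0 + t *\<^sub>R x) \<le> (1 - t) * phi j 0 + t * phi j x"
    using convex_onD[OF c, of t 0 x] t x by simp
  then show ?thesis using ps_zero[OF j] by simp
qed

lemma ps_lin_below: "j \<ge> 1 \<Longrightarrow> 1 \<le> x \<Longrightarrow> x * phi j 1 \<le> phi j x"
proof -
  assume j: "j \<ge> 1" and x: "1 \<le> x"
  have "phi j ((1/x) * x) \<le> (1/x) * phi j x" using ps_cvx[OF j, of "1/x" x] x by simp
  then show ?thesis using x by (simp add: field_simps)
qed

lemma ps_strict: "j \<ge> 1 \<Longrightarrow> 0 \<le> s \<Longrightarrow> s < t \<Longrightarrow> phi j s < phi j t"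
proof -
  assume j: "j \<ge> 1" and s: "0 \<le> s" "s < t"
  have tp: "t > 0" using s by linarith
  have st: "(s/t) * t = s" using tp by simp
  have "phi j ((s/t) * t) \<le> (s/t) * phi j t" using s by (intro ps_cvx[OF j]) auto
  then have 1: "phi j s \<le> (s/t) * phi j t" unfolding st .
  have q: "s/t < 1" using s tp by (simp add: divide_less_eq)
  have "(s/t) * phi j t < 1 * phi j t" using ps_pos[OF j tp] q
    by (intro mult_strict_right_mono) auto
  with 1 show ?thesis by linarith
qed

lemma Phi_Suc: "Phi_n phi (Suc k) x = Phi_n phi k x + phi (Suc k) x"
  unfolding Phi_n_def by simp

lemma Phi_zero: "Phi_n phi k 0 = 0"
  unfolding Phi_n_def using ps_zero by simp

lemma Phi_nonneg: "0 \<le> x \<Longrightarrow> 0 \<le> Phi_n phi k x"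
  unfolding Phi_n_def by (intro sum_nonneg ps_nonneg) auto

lemma Phi_mono: "0 \<le> s \<Longrightarrow> s \<le> t \<Longrightarrow> Phi_n phi k s \<le> Phi_n phi k t"
  unfolding Phi_n_def by (intro sum_mono ps_mono) auto

lemma Phi_strict: assumes "k \<ge> 1" "0 \<le> s" "s < t" shows "Phi_n phi k s < Phi_n phi k t"
  unfolding Phi_n_def
proof (rule sum_strict_mono_ex1)
  show "finite {1..k}" by simp
  show "\<forall>x\<in>{1..k}. phi x s \<le> phi x t" using assms by (auto intro!: ps_mono)
  show "\<exists>a\<in>{1..k}. phi a s < phi a t" using assms by (intro bexI[of _ 1] ps_strict) auto
qed

lemma Phi_cvx: "0 \<le> t \<Longrightarrow> t \<le> 1 \<Longrightarrow> 0 \<le> x \<Longrightarrow> Phi_n phi k (t * x) \<le> t * Phi_n phi k x"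
  unfolding Phi_n_def sum_distrib_left by (intro sum_mono ps_cvx) auto

lemma Phi_mono_k: "k \<le> m \<Longrightarrow> 0 \<le> x \<Longrightarrow> Phi_n phi k x \<le> Phi_n phi m x"
  unfolding Phi_n_def using ps_nonneg by (intro sum_mono2) auto

lemma Phi_ge1: "k \<ge> 1 \<Longrightarrow> 0 \<le> x \<Longrightarrow> phi 1 x \<le> Phi_n phi k x"
  using Phi_mono_k[of 1 k x] by (simp add: Phi_n_def)

lemma Phi_avg: assumes "k \<le> m" "0 \<le> x" shows "real k * Phi_n phi m x \<le> real m * Phi_n phi k x"
  using assms(1) proof (induction m rule: dec_induct)
  case base then show ?case by simp
next
  case (step m)
  have "real k * phi (Suc m) x \<le> Phi_n phi k x"
  proof -
    have "real (card {1..k}) * phi (Suc m) x \<le> (\<Sum>j=1..k. phi j x)"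
      using step assms by (intro sum_bounded_below) (auto intro!: ps_dec)
    then show ?thesis by (simp add: Phi_n_def)
  qed
  then show ?case using step by (simp add: Phi_Suc algebra_simps)
qed

lemma Phi_card: "finite S \<Longrightarrow> S \<subseteq> {1..} \<Longrightarrow> 0 \<le> h \<Longrightarrow> (\<Sum>j\<in>S. phi j h) \<le> Phi_n phi (card S) h"
proof (induction "card S" arbitrary: S)
  case 0 then show ?case by (simp add: Phi_n_def)
next
  case (Suc n)
  then have ne: "S \<noteq> {}" by auto
  define m where "m = Max S"
  have mS: "m \<in> S" using Suc ne m_def by simp
  have cm: "card (S - {m}) = n" using Suc mS by simp
  have "card S \<le> m"
  proof -
    have "S \<subseteq> {1..m}" using Suc m_def by auto
    then show ?thesis using card_mono[of "{1..m}" S] by simp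
  qed
  have "(\<Sum>j\<in>S. phi j h) = (\<Sum>j\<in>S - {m}. phi j h) + phi m h"
    using Suc mS by (simp add: sum.remove add.commute)
  also have "\<dots> \<le> Phi_n phi n h + phi (Suc n) h"
  proof (rule add_mono)
    show "(\<Sum>j\<in>S - {m}. phi j h) \<le> Phi_n phi n h"
      using Suc.hyps(1)[of "S - {m}"] Suc.prems cm by auto
    show "phi m h \<le> phi (Suc n) h" using \<open>card S \<le> m\<close> Suc.hyps(2) Suc.prems
      by (intro ps_dec) auto
  qed
  also have "\<dots> = Phi_n phi (card S) h" using Suc.hyps(2) Phi_Suc[of n h] by simp
  finally show ?case .
qed

end

context
  fixes phi :: "nat \<Rightarrow> real \<Rightarrow> real"
  assumes PS: "Phi_sequence phi"
begin

lemma Phi_cont: "continuous_on {0<..} (Phi_n phi k)"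
proof -
  have "continuous_on {0<..} (phi j)" if "j \<in> {1..k}" for j
  proof -
    have c: "convex_on {0..} (phi j)" using PS2[OF PS, of j] that by auto
    have "convex_on {0<..} (phi j)"
      using c by (rule convex_on_subset) auto
    then show ?thesis by (intro convex_on_continuous) auto
  qed
  then have "continuous_on {0<..} (\<lambda>x. \<Sum>j=1..k. phi j x)"
    by (intro continuous_on_sum) auto
  then show ?thesis unfolding Phi_n_def[abs_def] by simp
qed

lemma Phi_inv: assumes k: "k \<ge> 1"
  shows "0 < Phi_n_inv phi k 1 \<and> Phi_n phi k (Phi_n_inv phi k 1) = 1"
proof -
  define e where "e = 1 / (Phi_n phi k 1 + 2)"
  have P1: "0 \<le> Phi_n phi k 1" using Phi_nonneg[OF PS] by simp
  have e0: "0 < e" "e \<le> 1" using P1 by (auto simp: e_def field_simps)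
  have "Phi_n phi k (e * 1) \<le> e * Phi_n phi k 1" using e0 by (intro Phi_cvx[OF PS]) auto
  also have "\<dots> < 1" using P1 by (simp add: e_def field_simps)
  finally have pe: "Phi_n phi k e \<le> 1" by simp
  have f1: "0 < phi 1 1" using ps_pos[OF PS] by simp
  define R where "R = 1 / phi 1 1 + 1"
  have R1: "1 \<le> R" using f1 by (simp add: R_def)
  have "1 \<le> R * phi 1 1" using f1 by (simp add: R_def field_simps)
  also have "\<dots> \<le> phi 1 R" using ps_lin_below[OF PS _ R1] by simp
  also have "\<dots> \<le> Phi_n phi k R" using Phi_ge1[OF PS k] R1 by simp
  finally have pR: "1 \<le> Phi_n phi k R" .
  have "continuous_on {e..R} (Phi_n phi k)"
    using Phi_cont by (rule continuous_on_subset) (use e0 in auto)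
  then obtain x where x: "e \<le> x" "x \<le> R" "Phi_n phi k x = 1"
    using IVT'[of "Phi_n phi k" e 1 R] pe pR e0 R1 by auto
  have uniq: "y = x" if "0 \<le> y \<and> Phi_n phi k y = 1" for y
  proof (rule ccontr)
    assume "y \<noteq> x"
    then consider "y < x" | "x < y" by linarith
    then show False
    proof cases
      case 1 then show False using Phi_strict[OF PS k, of y x] that x by simp
    next
      case 2 then show False using Phi_strict[OF PS k, of x y] that x e0 by simp
    qed
  qed
  have "Phi_n_inv phi k 1 = x"
    unfolding Phi_n_inv_def
    by (rule the_equality) (use x e0 uniq in auto)
  then show ?thesis using x e0 by simp
qed

lemma inv_le: assumes "k \<ge> 1" "0 \<le> x" "Phi_n phi k x \<le> 1" shows "x \<le> Phi_n_inv phi k 1"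
proof (rule ccontr)
  assume "\<not> ?thesis"
  then have "Phi_n phi k (Phi_n_inv phi k 1) < Phi_n phi k x"
    using Phi_inv[OF assms(1)] by (intro Phi_strict[OF PS assms(1)]) auto
  then show False using Phi_inv[OF assms(1)] assms by simp
qed

lemma inv_ge: assumes "k \<ge> 1" "Phi_n_inv phi k 1 \<le> x" shows "1 \<le> Phi_n phi k x"
  using Phi_mono[OF PS, of "Phi_n_inv phi k 1" x k] Phi_inv[OF assms(1)] assms by simp

end

context
  fixes phi :: "nat \<Rightarrow> real \<Rightarrow> real"
  assumes PS: "Phi_sequence phi"
begin

lemma step_ineq:
  assumes k: "k \<ge> 1" and y: "0 \<le> y" "y \<le> x" and B: "0 \<le> B" and p: "1 \<le> p"
    and h: "real k * x powr p \<le> B * Phi_n phi k x"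
  shows "real k * (x powr p - y powr p) \<le> p * B * (Phi_n phi k x - Phi_n phi k y)"
proof (cases "x = 0")
  case True then show ?thesis using y by simp
next
  case False
  then have x0: "x > 0" using y by simp
  define t where "t = y / x"
  have t: "0 \<le> t" "t \<le> 1" using y x0 by (auto simp: t_def)
  have yt: "y = t * x" using x0 by (simp add: t_def)
  have c1: "Phi_n phi k y \<le> t * Phi_n phi k x" unfolding yt using t x0 by (intro Phi_cvx[OF PS]) auto
  have P0: "0 \<le> Phi_n phi k x" using Phi_nonneg[OF PS] x0 by simp
  have yp: "y powr p = t powr p * x powr p" unfolding yt using t x0 by (simp add: powr_mult)
  have b: "1 - t powr p \<le> p * (1 - t)" using bern_powr[OF p t] .
  have "real k * (x powr p - y powr p) = (real k * x powr p) * (1 - t powr p)"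
    unfolding yp by (simp add: algebra_simps)
  also have "\<dots> \<le> (real k * x powr p) * (p * (1 - t))"
    using b by (intro mult_left_mono) auto
  also have "\<dots> \<le> (B * Phi_n phi k x) * (p * (1 - t))"
    using h t p by (intro mult_right_mono) auto
  also have "\<dots> = p * B * ((1 - t) * Phi_n phi k x)" by (simp add: algebra_simps)
  also have "\<dots> \<le> p * B * (Phi_n phi k x - Phi_n phi k y)"
    using c1 p B by (intro mult_left_mono) (auto simp: algebra_simps)
  finally show ?thesis .
qed

lemma abel:
  assumes p: "1 \<le> p" and B: "0 \<le> B"
    and x0: "\<forall>k\<in>{1..K}. 0 \<le> x k"
    and xd: "\<forall>k. 1 \<le> k \<longrightarrow> k < K \<longrightarrow> x (Suc k) \<le> x k"
    and xh: "\<forall>k\<in>{1..K}. real k * x k powr p \<le> B * Phi_n phi k (x k)"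
    and y: "0 \<le> y" "K \<ge> 1 \<longrightarrow> y \<le> x K"
  shows "(\<Sum>k=1..K. x k powr p) - real K * y powr p
          \<le> p * B * ((\<Sum>j=1..K. phi j (x j)) - Phi_n phi K y)"
  using x0 xd xh y
proof (induction K arbitrary: y)
  case 0 then show ?case by (simp add: Phi_n_def)
next
  case (Suc K)
  have IH: "(\<Sum>k=1..K. x k powr p) - real K * x (Suc K) powr p
          \<le> p * B * ((\<Sum>j=1..K. phi j (x j)) - Phi_n phi K (x (Suc K)))"
    using Suc.prems by (intro Suc.IH) auto
  have st: "real (Suc K) * (x (Suc K) powr p - y powr p)
      \<le> p * B * (Phi_n phi (Suc K) (x (Suc K)) - Phi_n phi (Suc K) y)"
  proof (rule step_ineq)
    have "Suc K \<in> {1..Suc K}" by simp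
    then show "real (Suc K) * x (Suc K) powr p \<le> B * Phi_n phi (Suc K) (x (Suc K))"
      using Suc.prems(3) by blast
  qed (use Suc.prems B p in auto)
  have e1: "(\<Sum>k=1..Suc K. x k powr p) - real (Suc K) * y powr p
     = ((\<Sum>k=1..K. x k powr p) - real K * x (Suc K) powr p)
       + real (Suc K) * (x (Suc K) powr p - y powr p)"
    by (simp add: algebra_simps)
  have e2: "p * B * ((\<Sum>j=1..Suc K. phi j (x j)) - Phi_n phi (Suc K) y)
     = p * B * ((\<Sum>j=1..K. phi j (x j)) - Phi_n phi K (x (Suc K)))
       + p * B * (Phi_n phi (Suc K) (x (Suc K)) - Phi_n phi (Suc K) y)"
    by (simp add: Phi_Suc[OF PS] algebra_simps)
  show ?case unfolding e1 e2 using IH st by linarith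
qed

lemma dec_chain:
  assumes xd: "\<forall>k. 1 \<le> k \<longrightarrow> k < n \<longrightarrow> x (Suc k) \<le> x k"
  shows "1 \<le> j \<Longrightarrow> j \<le> k \<Longrightarrow> k \<le> n \<Longrightarrow> (x k :: real) \<le> x j"
proof (induction k)
  case 0 then show ?case by simp
next
  case (Suc k)
  show ?case
  proof (cases "j = Suc k")
    case True then show ?thesis by simp
  next
    case False
    then have "x k \<le> x j" using Suc by simp
    moreover have "x (Suc k) \<le> x k" using xd Suc False by simp
    ultimately show ?thesis by simp
  qed
qed

lemma key:
  assumes p: "1 \<le> p" and n: "n \<ge> 1" and E: "0 \<le> E"
    and aE: "\<forall>k\<in>{1..n}. real k * Phi_n_inv phi k 1 powr p \<le> E"
    and x0: "\<forall>k\<in>{1..n}. 0 \<le> x k"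
    and xd: "\<forall>k. 1 \<le> k \<longrightarrow> k < n \<longrightarrow> x (Suc k) \<le> x k"
    and xs: "(\<Sum>j=1..n. phi j (x j)) \<le> 1"
  shows "(\<Sum>j=1..n. x j powr p) \<le> (2 * p + 1) * E"
proof -
  define a where "a k = Phi_n_inv phi k 1" for k
  define x' where "x' k = (if a n \<le> x k then x k else 0)" for k
  have x'0: "\<forall>k\<in>{1..n}. 0 \<le> x' k" using x0 by (auto simp: x'_def)
  have x'le: "x' k \<le> x k" if "k \<in> {1..n}" for k using x0 that by (auto simp: x'_def)
  have x'd: "\<forall>k. 1 \<le> k \<longrightarrow> k < n \<longrightarrow> x' (Suc k) \<le> x' k"
  proof (intro allI impI)
    fix k assume k: "1 \<le> k" "k < n"
    have d: "x (Suc k) \<le> x k" using xd k by simp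
    show "x' (Suc k) \<le> x' k"
    proof (cases "a n \<le> x (Suc k)")
      case True then show ?thesis using d by (auto simp: x'_def)
    next
      case False then show ?thesis using x0 k by (auto simp: x'_def)
    qed
  qed
  have xs': "(\<Sum>j=1..n. phi j (x' j)) \<le> 1"
  proof -
    have "(\<Sum>j=1..n. phi j (x' j)) \<le> (\<Sum>j=1..n. phi j (x j))"
      using x'0 x'le by (intro sum_mono ps_mono[OF PS]) auto
    then show ?thesis using xs by simp
  qed
  have pref: "(\<Sum>j=1..k. phi j (x j)) \<le> 1" if "k \<le> n" for k
  proof -
    have "(\<Sum>j=1..k. phi j (x j)) \<le> (\<Sum>j=1..n. phi j (x j))"
      using that x0 by (intro sum_mono2) (auto intro!: ps_nonneg[OF PS])
    then show ?thesis using xs by simp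
  qed
  have xh: "\<forall>k\<in>{1..n}. real k * x' k powr p \<le> (2 * E) * Phi_n phi k (x' k)"
  proof
    fix k assume kn: "k \<in> {1..n}"
    show "real k * x' k powr p \<le> (2 * E) * Phi_n phi k (x' k)"
    proof (cases "a n \<le> x k")
      case False then show ?thesis using E Phi_nonneg[OF PS, of 0 k] p by (simp add: x'_def)
    next
      case True
      define y where "y = x k"
      have x'y: "x' k = y" using True by (simp add: x'_def y_def)
      have y0: "0 \<le> y" using x0 kn by (simp add: y_def)
      have "Phi_n phi k y \<le> (\<Sum>j=1..k. phi j (x j))"
        unfolding Phi_n_def y_def
        using kn x0 dec_chain[OF xd] by (intro sum_mono ps_mono[OF PS]) auto
      also have "\<dots> \<le> 1" using pref kn by simp
      finally have "Phi_n phi k y \<le> 1" .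
      then have yak: "y \<le> a k" unfolding a_def using kn y0 by (intro inv_le[OF PS]) auto
      define m where "m = (LEAST m. 1 \<le> m \<and> a m \<le> y)"
      have ex: "1 \<le> n \<and> a n \<le> y" using n True by (simp add: y_def)
      have m1: "1 \<le> m \<and> a m \<le> y" unfolding m_def by (rule LeastI[of _ n]) (rule ex)
      have mn: "m \<le> n" unfolding m_def by (rule Least_le) (rule ex)
      have a0: "0 \<le> a j" if "j \<ge> 1" for j using Phi_inv[OF PS that] by (simp add: a_def less_imp_le)
      show ?thesis
      proof (cases "m \<le> k")
        case True
        have "1 \<le> Phi_n phi m y" using m1 by (intro inv_ge[OF PS]) (auto simp: a_def)
        also have "\<dots> \<le> Phi_n phi k y" using True y0 by (intro Phi_mono_k[OF PS])
        finally have P1: "1 \<le> Phi_n phi k y" .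
        have "real k * y powr p \<le> real k * a k powr p"
          using yak y0 p by (intro mult_left_mono powr_mono2) auto
        also have "\<dots> \<le> E" using aE kn by (simp add: a_def)
        also have "\<dots> \<le> 2 * E * 1" using E by simp
        also have "\<dots> \<le> 2 * E * Phi_n phi k y" using E P1 by (intro mult_left_mono) auto
        finally show ?thesis unfolding x'y .
      next
        case False
        then have mk: "k < m" by simp
        have m2: "m \<ge> 2" using mk kn by simp
        have nle: "\<not> (1 \<le> m - 1 \<and> a (m - 1) \<le> y)"
          unfolding m_def by (rule not_less_Least) (use m2 m_def in simp)
        have "1 \<le> m - 1" using m2 by simp
        then have "\<not> a (m - 1) \<le> y" using nle by blast
        then have ya: "y < a (m - 1)" by simp
        have "1 \<le> Phi_n phi m y" using m1 by (intro inv_ge[OF PS]) (auto simp: a_def)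
        then have "real k * 1 \<le> real k * Phi_n phi m y" by (intro mult_left_mono) auto
        also have "\<dots> \<le> real m * Phi_n phi k y" using mk y0 by (intro Phi_avg[OF PS]) auto
        finally have kP: "real k \<le> real m * Phi_n phi k y" by simp
        have "real m * (real k * y powr p) = real k * (real m * y powr p)" by simp
        also have "\<dots> \<le> real k * (real m * a (m - 1) powr p)"
          using ya y0 p by (intro mult_left_mono powr_mono2) auto
        also have "\<dots> \<le> real k * (2 * E)"
        proof -
          have mm: "real m \<le> 2 * real (m - 1)" using m2 by (simp add: of_nat_diff)
          have "real m * a (m - 1) powr p \<le> (2 * real (m - 1)) * a (m - 1) powr p"
            using mm by (intro mult_right_mono) auto
          then have "real m * a (m - 1) powr p \<le> 2 * (real (m - 1) * a (m - 1) powr p)"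
            by (simp add: mult.assoc)
          also have "\<dots> \<le> 2 * E"
          proof -
            have "m - 1 \<in> {1..n}" unfolding atLeastAtMost_iff using m2 mn by arith
            then have "real (m - 1) * a (m - 1) powr p \<le> E" using aE unfolding a_def by blast
            then show ?thesis by simp
          qed
          finally show ?thesis by (intro mult_left_mono) auto
        qed
        also have "\<dots> \<le> real m * Phi_n phi k y * (2 * E)" using kP E by (intro mult_right_mono) auto
        finally have "real m * (real k * y powr p) \<le> real m * ((2 * E) * Phi_n phi k y)"
          by (simp add: algebra_simps)
        then show ?thesis unfolding x'y using m2 by simp
      qed
    qed
  qed
  have A: "(\<Sum>k=1..n. x' k powr p) - real n * 0 powr p
          \<le> p * (2 * E) * ((\<Sum>j=1..n. phi j (x' j)) - Phi_n phi n 0)"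
    using x'0 x'd xh E p by (intro abel) auto
  then have "(\<Sum>k=1..n. x' k powr p) \<le> p * (2 * E) * (\<Sum>j=1..n. phi j (x' j))"
    using Phi_zero[OF PS] p by simp
  also have "\<dots> \<le> p * (2 * E) * 1" using xs' p E by (intro mult_left_mono) auto
  finally have A2: "(\<Sum>k=1..n. x' k powr p) \<le> 2 * p * E" by simp
  have "(\<Sum>j=1..n. x j powr p) \<le> (\<Sum>j=1..n. x' j powr p + a n powr p)"
  proof (rule sum_mono)
    fix j assume j: "j \<in> {1..n}"
    show "x j powr p \<le> x' j powr p + a n powr p"
    proof (cases "a n \<le> x j")
      case True then show ?thesis by (simp add: x'_def)
    next
      case False then have "x j powr p \<le> a n powr p" using x0 j p by (intro powr_mono2) auto
      then show ?thesis using p by (simp add: x'_def False)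
    qed
  qed
  also have "\<dots> = (\<Sum>j=1..n. x' j powr p) + real n * a n powr p" by (simp add: sum.distrib)
  also have "\<dots> \<le> 2 * p * E + E"
  proof -
    have "n \<in> {1..n}" using n by simp
    then have "real n * a n powr p \<le> E" using aE unfolding a_def by blast
    then show ?thesis using A2 by linarith
  qed
  finally show ?thesis by (simp add: algebra_simps)
qed

end

lemma sort_perm:
  fixes z :: "nat \<Rightarrow> real"
  shows "\<exists>\<sigma>. bij_betw \<sigma> {1..n} {1..n} \<and> (\<forall>i j. 1 \<le> i \<longrightarrow> i \<le> j \<longrightarrow> j \<le> n \<longrightarrow> z (\<sigma> j) \<le> z (\<sigma> i))"
proof -
  define L where "L = sort_key (\<lambda>i. - z i) [1..<n+1]"
  have lenL: "length L = n" by (simp add: L_def)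
  have dL: "distinct L" by (simp add: L_def)
  have sL: "set L = {1..n}" by (auto simp: L_def)
  have so: "sorted (map (\<lambda>i. - z i) L)" unfolding L_def by (rule sorted_sort_key)
  define \<sigma> where "\<sigma> i = L ! (i - 1)" for i
  have b1: "bij_betw ((!) L) {..<n} {1..n}" using bij_betw_nth[OF dL] lenL sL by simp
  have b0: "bij_betw (\<lambda>i. i - 1) {1..n} {..<n}"
    by (rule bij_betw_byWitness[of _ "\<lambda>i. i + 1"]) auto
  have "bij_betw \<sigma> {1..n} {1..n}" unfolding \<sigma>_def
    using bij_betw_trans[OF b0 b1] by (simp add: comp_def)
  moreover have "z (\<sigma> j) \<le> z (\<sigma> i)" if "1 \<le> i" "i \<le> j" "j \<le> n" for i j
  proof -
    have "map (\<lambda>i. - z i) L ! (i - 1) \<le> map (\<lambda>i. - z i) L ! (j - 1)"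
      using that lenL by (intro sorted_nth_mono[OF so]) auto
    then show ?thesis using that lenL by (simp add: \<sigma>_def)
  qed
  ultimately show ?thesis by blast
qed

lemma nu_pos: "modulus_of_variation nu \<Longrightarrow> n \<ge> 1 \<Longrightarrow> 0 < nu n"
  unfolding modulus_of_variation_def by simp

lemma nu_mono: assumes "modulus_of_variation nu" "1 \<le> k" "k \<le> n" shows "nu k \<le> nu n"
  using assms(3)
proof (induction n rule: dec_induct)
  case base then show ?case by simp
next
  case (step m)
  then have "nu m \<le> nu (Suc m)" using assms unfolding modulus_of_variation_def by simp
  then show ?case using step by simp
qed

lemma var_up:
  assumes "nonoverlapping n a b"
  shows "ereal (\<Sum>j=1..n. phi j \<bar>g (b j) - g (a j)\<bar>) \<le> Var_Phi phi g"
  unfolding Var_Phi_def by (rule SUP_upper2[of "(n, a, b)"]) (use assms in auto)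

lemma var_fin:
  assumes "Var_Phi phi g < \<infinity>"
  obtains V where "0 \<le> V"
    "\<And>n a b. nonoverlapping n a b \<Longrightarrow> (\<Sum>j=1..n. phi j \<bar>g (b j) - g (a j)\<bar>) \<le> V"
proof -
  have n0: "nonoverlapping 0 (\<lambda>_. 0) (\<lambda>_. 0)" by (simp add: nonoverlapping_def)
  have "ereal 0 \<le> Var_Phi phi g" using var_up[OF n0, of phi g] by simp
  then obtain V where V: "Var_Phi phi g = ereal V" "0 \<le> V" using assms
    by (cases "Var_Phi phi g") auto
  show ?thesis
  proof (rule that[OF V(2)])
    fix n a b assume "nonoverlapping n a b"
    from var_up[OF this, of phi g] show "(\<Sum>j=1..n. phi j \<bar>g (b j) - g (a j)\<bar>) \<le> V"
      using V by simp
  qed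
qed

lemma upsilon_nonneg: "0 \<le> upsilon_p p n f"
proof -
  have n0: "nonoverlapping n (\<lambda>_. 0) (\<lambda>_. 0)" by (simp add: nonoverlapping_def)
  have "ereal ((\<Sum>j=1..n. \<bar>f 0 - f 0\<bar> powr p) powr (1 / p)) \<le> upsilon_p p n f"
    unfolding upsilon_p_def by (rule SUP_upper2[of "((\<lambda>_. 0), (\<lambda>_. 0))"]) (use n0 in auto)
  then show ?thesis by (simp add: zero_ereal_def)
qed

lemma nonoverlapping_perm:
  assumes "nonoverlapping n a b" "bij_betw \<sigma> {1..n} {1..n}"
  shows "nonoverlapping n (a \<circ> \<sigma>) (b \<circ> \<sigma>)"
proof -
  have m: "\<sigma> j \<in> {1..n}" if "j \<in> {1..n}" for j using assms(2) that by (auto dest: bij_betwE)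
  have i: "\<sigma> i \<noteq> \<sigma> j" if "i \<in> {1..n}" "j \<in> {1..n}" "i \<noteq> j" for i j
    using assms(2) that unfolding bij_betw_def inj_on_def by blast
  show ?thesis using assms(1) m i unfolding nonoverlapping_def by (simp; blast)
qed

lemma suff:
  assumes PS: "Phi_sequence phi" and p: "1 \<le> p" and nu: "modulus_of_variation nu"
    and C0: "0 \<le> C"
    and hC: "\<forall>k\<ge>1. real k powr (1 / p) * Phi_n_inv phi k 1 \<le> C * nu k"
    and f: "f \<in> PhiBV phi"
  shows "f \<in> V_p p nu"
proof -
  obtain c where c: "c > 0" and fin: "Var_Phi phi (\<lambda>x. c * f x) < \<infinity>"
    using f unfolding PhiBV_def by blast
  obtain V where V0: "0 \<le> V" and V: "\<And>n a b. nonoverlapping n a b \<Longrightarrow>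
      (\<Sum>j=1..n. phi j \<bar>c * f (b j) - c * f (a j)\<bar>) \<le> V"
    using var_fin[OF fin] by blast
  have cabs: "\<bar>c * f y - c * f x\<bar> = c * \<bar>f y - f x\<bar>" for x y
    using c by (simp add: right_diff_distrib[symmetric] abs_mult)
  define M where "M = max 1 V"
  have M1: "1 \<le> M" "V \<le> M" by (auto simp: M_def)
  have f1: "0 < phi 1 1" using ps_pos[OF PS] by simp
  define R where "R = max 1 (V / phi 1 1)"
  have bnd: "\<bar>f x - f 0\<bar> \<le> R / c" if x: "x \<in> {0..1}" for x
  proof -
    have "nonoverlapping 1 (\<lambda>_. 0) (\<lambda>_. x)" using x by (simp add: nonoverlapping_def)
    from V[OF this] have le: "phi 1 (c * \<bar>f x - f 0\<bar>) \<le> V" by (simp add: cabs)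
    have "c * \<bar>f x - f 0\<bar> \<le> R"
    proof (rule ccontr)
      assume "\<not> ?thesis"
      then have gt: "R < c * \<bar>f x - f 0\<bar>" by simp
      have R1: "1 \<le> R" by (simp add: R_def)
      have "(c * \<bar>f x - f 0\<bar>) * phi 1 1 \<le> phi 1 (c * \<bar>f x - f 0\<bar>)"
        using R1 gt by (intro ps_lin_below[OF PS]) auto
      moreover have "R * phi 1 1 < (c * \<bar>f x - f 0\<bar>) * phi 1 1"
        using gt f1 by (intro mult_strict_right_mono) auto
      moreover have "V \<le> R * phi 1 1"
      proof -
        have "V / phi 1 1 \<le> R" by (simp add: R_def)
        then show ?thesis using f1 by (simp add: divide_le_eq)
      qed
      ultimately show False using le by linarith
    qed
    then show ?thesis using c by (simp add: field_simps)
  qed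
  have "bounded (f ` {0..1})"
    unfolding bounded_iff
  proof (intro exI ballI)
    fix y assume "y \<in> f ` {0..1}"
    then obtain x where x: "x \<in> {0..1}" "y = f x" by auto
    have "\<bar>f x\<bar> \<le> \<bar>f 0\<bar> + R / c" using bnd[OF x(1)] by linarith
    then show "norm y \<le> \<bar>f 0\<bar> + R / c" using x by simp
  qed
  moreover
  define K0 where "K0 = (M / c) * (2 * p + 1) powr (1 / p) * C"
  have K0: "0 \<le> K0" using M1 c C0 by (simp add: K0_def)
  have ups: "upsilon_p p n f \<le> ereal (K0 * nu n)" if n: "n \<ge> 1" for n
    unfolding upsilon_p_def
  proof (rule SUP_least, clarify)
    fix a b assume ov: "nonoverlapping n a b"
    define D where "D j = \<bar>f (b j) - f (a j)\<bar>" for j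
    define z where "z j = (c / M) * D j" for j
    obtain \<sigma> where \<sigma>: "bij_betw \<sigma> {1..n} {1..n}"
      and srt: "\<forall>i j. 1 \<le> i \<longrightarrow> i \<le> j \<longrightarrow> j \<le> n \<longrightarrow> z (\<sigma> j) \<le> z (\<sigma> i)"
      using sort_perm[of n z] by blast
    have ov2: "nonoverlapping n (a \<circ> \<sigma>) (b \<circ> \<sigma>)" by (rule nonoverlapping_perm[OF ov \<sigma>])
    have sV: "(\<Sum>j=1..n. phi j (c * D (\<sigma> j))) \<le> V"
      using V[OF ov2] by (simp add: cabs D_def)
    have D0: "0 \<le> D j" for j by (simp add: D_def)
    have xs: "(\<Sum>j=1..n. phi j (z (\<sigma> j))) \<le> 1"
    proof -
      have "(\<Sum>j=1..n. phi j (z (\<sigma> j))) = (\<Sum>j=1..n. phi j ((1 / M) * (c * D (\<sigma> j))))"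
        by (simp add: z_def)
      also have "\<dots> \<le> (\<Sum>j=1..n. (1 / M) * phi j (c * D (\<sigma> j)))"
        using M1 c D0 by (intro sum_mono ps_cvx[OF PS]) auto
      also have "\<dots> = (1 / M) * (\<Sum>j=1..n. phi j (c * D (\<sigma> j)))" by (simp add: sum_distrib_left)
      also have "\<dots> \<le> (1 / M) * M" using sV M1 by (intro mult_left_mono) auto
      finally show ?thesis using M1 by simp
    qed
    define E where "E = (C * nu n) powr p"
    have E0: "0 \<le> E" by (simp add: E_def)
    have nun: "0 < nu n" using nu_pos[OF nu n] .
    have aE: "\<forall>k\<in>{1..n}. real k * Phi_n_inv phi k 1 powr p \<le> E"
    proof
      fix k assume k: "k \<in> {1..n}"
      have a0: "0 \<le> Phi_n_inv phi k 1" using Phi_inv[OF PS, of k] k by simp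
      have "real k * Phi_n_inv phi k 1 powr p = (real k powr (1 / p) * Phi_n_inv phi k 1) powr p"
        using a0 p k by (simp add: powr_mult powr_powr)
      also have "\<dots> \<le> (C * nu n) powr p"
      proof (rule powr_mono2)
        show "0 \<le> real k powr (1 / p) * Phi_n_inv phi k 1" using a0 by simp
        have "real k powr (1 / p) * Phi_n_inv phi k 1 \<le> C * nu k" using hC k by simp
        also have "\<dots> \<le> C * nu n" using nu_mono[OF nu, of k n] k C0 by (intro mult_left_mono) auto
        finally show "real k powr (1 / p) * Phi_n_inv phi k 1 \<le> C * nu n" .
      qed (use p in auto)
      finally show "real k * Phi_n_inv phi k 1 powr p \<le> E" by (simp add: E_def)
    qed
    have z0: "\<forall>k\<in>{1..n}. 0 \<le> z (\<sigma> k)" using c M1 D0 by (simp add: z_def)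
    have zd: "\<forall>k. 1 \<le> k \<longrightarrow> k < n \<longrightarrow> z (\<sigma> (Suc k)) \<le> z (\<sigma> k)" using srt by auto
    have kk: "(\<Sum>j=1..n. z (\<sigma> j) powr p) \<le> (2 * p + 1) * E"
      by (rule key[OF PS p n E0 aE z0 zd xs])
    have "(\<Sum>j=1..n. z (\<sigma> j) powr p) = (\<Sum>j=1..n. z j powr p)"
      by (rule sum.reindex_bij_betw[OF \<sigma>])
    also have "\<dots> = (\<Sum>j=1..n. (c / M) powr p * D j powr p)"
    proof (rule sum.cong)
      fix j show "z j powr p = (c / M) powr p * D j powr p"
        unfolding z_def by (rule powr_mult)
    qed simp
    also have "\<dots> = (c / M) powr p * (\<Sum>j=1..n. D j powr p)"
      by (simp add: sum_distrib_left)
    finally have S1: "(c / M) powr p * (\<Sum>j=1..n. D j powr p) \<le> (2 * p + 1) * E" using kk by simp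
    define S where "S = (\<Sum>j=1..n. D j powr p)"
    have S0: "0 \<le> S" by (simp add: S_def sum_nonneg)
    define Q where "Q = K0 * nu n"
    have Q0: "0 \<le> Q" using K0 nun by (simp add: Q_def)
    have mc: "(M / c) powr p * (c / M) powr p = 1"
      using c M1 by (simp add: powr_mult[symmetric])
    have "S = (M / c) powr p * ((c / M) powr p * S)" using mc by (simp add: mult.assoc[symmetric])
    also have "\<dots> \<le> (M / c) powr p * ((2 * p + 1) * E)"
      using S1 by (intro mult_left_mono) (auto simp: S_def)
    also have "\<dots> = Q powr p"
    proof -
      have r: "((2 * p + 1) powr (1 / p)) powr p = 2 * p + 1" using p by (simp add: powr_powr)
      have "Q = (M / c) * ((2 * p + 1) powr (1 / p) * (C * nu n))"
        unfolding Q_def K0_def by (simp only: mult.assoc)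
      then have "Q powr p = (M / c) powr p * (((2 * p + 1) powr (1 / p)) powr p * (C * nu n) powr p)"
        by (simp only: powr_mult)
      then show ?thesis unfolding r E_def by simp
    qed
    finally have "S \<le> Q powr p" .
    then have "S powr (1 / p) \<le> (Q powr p) powr (1 / p)" using S0 p by (intro powr_mono2) auto
    also have "\<dots> = Q" using Q0 p by (simp add: powr_powr)
    finally show "ereal ((\<Sum>j=1..n. \<bar>f (b j) - f (a j)\<bar> powr p) powr (1 / p)) \<le> ereal (K0 * nu n)"
      by (simp add: S_def D_def Q_def)
  qed
  have "(SUP n\<in>{1..}. upsilon_p p n f / ereal (nu n)) \<le> ereal K0"
  proof (rule SUP_least)
    fix n :: nat assume "n \<in> {1..}"
    then have n: "n \<ge> 1" by simp
    have nun: "0 < nu n" using nu_pos[OF nu n] .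
    show "upsilon_p p n f / ereal (nu n) \<le> ereal K0"
    proof (rule ereal_divide_le_posI)
      show "0 < ereal (nu n)" using nun by simp
      show "upsilon_p p n f \<noteq> - \<infinity>" using upsilon_nonneg[of p n f] by auto
      show "upsilon_p p n f \<le> ereal (nu n) * ereal K0" using ups[OF n] by (simp add: mult.commute)
    qed
  qed
  then have "(SUP n\<in>{1..}. upsilon_p p n f / ereal (nu n)) < \<infinity>"
    using le_less_trans[of _ "ereal K0" "\<infinity>"] by simp
  ultimately show ?thesis unfolding V_p_def by simp
qed

lemma spike_var:
  assumes PS: "Phi_sequence phi"
    and f0: "\<And>t. 0 \<le> f t"
    and ib: "\<And>S P. finite S \<Longrightarrow> S \<subseteq> {1..} \<Longrightarrow> inj_on P S \<Longrightarrow> (\<Sum>j\<in>S. phi j (f (P j))) \<le> T"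
    and ov: "nonoverlapping N a b"
  shows "(\<Sum>j=1..N. phi j \<bar>f (b j) - f (a j)\<bar>) \<le> 2 * T"
proof -
  define SR where "SR = {j\<in>{1..N}. a j < b j \<and> f (a j) \<le> f (b j)}"
  define SL where "SL = {j\<in>{1..N}. a j < b j \<and> f (b j) < f (a j)}"
  have ab: "a j \<le> b j" if "j \<in> {1..N}" for j using ov that unfolding nonoverlapping_def by blast
  have disj: "b i \<le> a j \<or> b j \<le> a i" if "i \<in> {1..N}" "j \<in> {1..N}" "i \<noteq> j" for i j
    using ov that unfolding nonoverlapping_def by blast
  have le: "phi j \<bar>f (b j) - f (a j)\<bar>
      \<le> (if j \<in> SR then phi j (f (b j)) else 0) + (if j \<in> SL then phi j (f (a j)) else 0)"
    if j: "j \<in> {1..N}" for j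
  proof -
    have j1: "j \<ge> 1" using j by simp
    consider "a j = b j" | "a j < b j \<and> f (a j) \<le> f (b j)" | "a j < b j \<and> f (b j) < f (a j)"
      using ab[OF j] by linarith
    then show ?thesis
    proof cases
      case 1 then show ?thesis using ps_zero[OF PS j1] by (simp add: SR_def SL_def)
    next
      case 2
      then have "j \<in> SR" "j \<notin> SL" using j by (auto simp: SR_def SL_def)
      moreover have "phi j \<bar>f (b j) - f (a j)\<bar> \<le> phi j (f (b j))"
        using 2 f0[of "a j"] by (intro ps_mono[OF PS j1]) auto
      ultimately show ?thesis by simp
    next
      case 3
      then have "j \<notin> SR" "j \<in> SL" using j by (auto simp: SR_def SL_def)
      moreover have "phi j \<bar>f (b j) - f (a j)\<bar> \<le> phi j (f (a j))"
        using 3 f0[of "b j"] by (intro ps_mono[OF PS j1]) auto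
      ultimately show ?thesis by simp
    qed
  qed
  have "(\<Sum>j=1..N. phi j \<bar>f (b j) - f (a j)\<bar>)
      \<le> (\<Sum>j=1..N. (if j \<in> SR then phi j (f (b j)) else 0) + (if j \<in> SL then phi j (f (a j)) else 0))"
    using le by (rule sum_mono)
  also have "\<dots> = (\<Sum>j\<in>SR. phi j (f (b j))) + (\<Sum>j\<in>SL. phi j (f (a j)))"
  proof -
    have "{1..N} \<inter> SR = SR" "{1..N} \<inter> SL = SL" by (auto simp: SR_def SL_def)
    then show ?thesis
      by (simp add: sum.distrib sum.If_cases)
  qed
  also have "\<dots> \<le> T + T"
  proof (rule add_mono)
    show "(\<Sum>j\<in>SR. phi j (f (b j))) \<le> T"
    proof (rule ib)
      show "finite SR" by (simp add: SR_def)
      show "SR \<subseteq> {1..}" by (auto simp: SR_def)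
      show "inj_on b SR"
      proof (rule inj_onI)
        fix i j assume i: "i \<in> SR" and j: "j \<in> SR" and e: "b i = b j"
        show "i = j"
        proof (rule ccontr)
          assume "i \<noteq> j"
          then have "b i \<le> a j \<or> b j \<le> a i" using disj i j by (auto simp: SR_def)
          then show False using i j e by (auto simp: SR_def)
        qed
      qed
    qed
    show "(\<Sum>j\<in>SL. phi j (f (a j))) \<le> T"
    proof (rule ib)
      show "finite SL" by (simp add: SL_def)
      show "SL \<subseteq> {1..}" by (auto simp: SL_def)
      show "inj_on a SL"
      proof (rule inj_onI)
        fix i j assume i: "i \<in> SL" and j: "j \<in> SL" and e: "a i = a j"
        show "i = j"
        proof (rule ccontr)
          assume "i \<noteq> j"
          then have "b i \<le> a j \<or> b j \<le> a i" using disj i j by (auto simp: SL_def)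
          then show False using i j e by (auto simp: SL_def)
        qed
      qed
    qed
  qed
  finally show ?thesis by simp
qed

definition pt :: "nat \<Rightarrow> real" where "pt m = 1 / (real m + 1)"

definition spk :: "(nat \<Rightarrow> nat) \<Rightarrow> (nat \<Rightarrow> real) \<Rightarrow> real \<Rightarrow> real" where
  "spk kk hh t = (if t \<in> range pt then
     (case prod_decode (inv pt t) of (i, l) \<Rightarrow> if l < kk i then hh i else 0) else 0)"

lemma pt_strict: "l < m \<Longrightarrow> pt m < pt l"
  unfolding pt_def by (simp add: frac_less2)

lemma pt_mono: "l \<le> m \<Longrightarrow> pt m \<le> pt l"
  using pt_strict by (cases "l = m") (auto simp: less_imp_le)

lemma pt_inj: "inj pt"
proof (rule injI)
  fix x y assume "pt x = pt y"
  then show "x = y" using pt_strict[of x y] pt_strict[of y x] by (cases x y rule: linorder_cases) auto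
qed

lemma pt_pos: "0 < pt m" "pt m \<le> 1" unfolding pt_def by auto

lemma spk_pt: "spk kk hh (pt m) = (case prod_decode m of (i, l) \<Rightarrow> if l < kk i then hh i else 0)"
  unfolding spk_def using pt_inj by simp

lemma spk_mid: "spk kk hh ((pt m + pt (Suc m)) / 2) = 0"
proof -
  have "(pt m + pt (Suc m)) / 2 \<notin> range pt"
  proof
    assume "(pt m + pt (Suc m)) / 2 \<in> range pt"
    then obtain l where l0: "(pt m + pt (Suc m)) / 2 = pt l" by auto
    then have l: "pt m + pt (Suc m) = 2 * pt l" by simp
    have s: "pt (Suc m) < pt m" using pt_strict by simp
    show False
    proof (cases "l \<le> m")
      case True then show ?thesis using pt_mono[OF True] s l by linarith
    next
      case False then have "Suc m \<le> l" by simp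
      then show ?thesis using pt_mono[of "Suc m" l] s l by linarith
    qed
  qed
  then show ?thesis unfolding spk_def by simp
qed

lemma spk_nonneg: "(\<And>i. 0 \<le> hh i) \<Longrightarrow> 0 \<le> spk kk hh t"
  unfolding spk_def by (auto split: prod.split)

lemma spk_inj_bound:
  assumes PS: "Phi_sequence phi" and hh0: "\<And>i. 0 \<le> hh i"
    and sm: "summable (\<lambda>i. Phi_n phi (kk i) (hh i))"
    and S: "finite S" "S \<subseteq> {1..}" and P: "inj_on P S"
  shows "(\<Sum>j\<in>S. phi j (spk kk hh (P j))) \<le> (\<Sum>i. Phi_n phi (kk i) (hh i))"
proof -
  define \<mu> where "\<mu> j = prod_decode (inv pt (P j))" for j
  define S1 where "S1 = {j\<in>S. P j \<in> range pt \<and> snd (\<mu> j) < kk (fst (\<mu> j))}"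
  have S1S: "S1 \<subseteq> S" by (auto simp: S1_def)
  have fS1: "finite S1" using S S1S finite_subset by blast
  have e1: "phi j (spk kk hh (P j)) = (if j \<in> S1 then phi j (hh (fst (\<mu> j))) else 0)"
    if j: "j \<in> S" for j
  proof -
    have j1: "j \<ge> 1" using S j by auto
    show ?thesis using ps_zero[OF PS j1] j
      by (auto simp: spk_def S1_def \<mu>_def split: prod.split)
  qed
  have "(\<Sum>j\<in>S. phi j (spk kk hh (P j))) = (\<Sum>j\<in>S. if j \<in> S1 then phi j (hh (fst (\<mu> j))) else 0)"
    using e1 by (rule sum.cong[OF refl])
  also have "\<dots> = (\<Sum>j\<in>S1. phi j (hh (fst (\<mu> j))))"
  proof -
    have "S \<inter> S1 = S1" using S1S by blast
    then show ?thesis using S by (simp add: sum.If_cases)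
  qed
  also have "\<dots> = (\<Sum>i\<in>(\<lambda>j. fst (\<mu> j)) ` S1. \<Sum>j\<in>{j. j \<in> S1 \<and> fst (\<mu> j) = i}. phi j (hh (fst (\<mu> j))))"
    by (rule sum.group[symmetric]) (use fS1 in auto)
  also have "\<dots> \<le> (\<Sum>i\<in>(\<lambda>j. fst (\<mu> j)) ` S1. Phi_n phi (kk i) (hh i))"
  proof (rule sum_mono)
    fix i assume "i \<in> (\<lambda>j. fst (\<mu> j)) ` S1"
    define Ti where "Ti = {j. j \<in> S1 \<and> fst (\<mu> j) = i}"
    have fTi: "finite Ti" using fS1 by (simp add: Ti_def)
    have Ti1: "Ti \<subseteq> {1..}" using S S1S by (auto simp: Ti_def)
    have "(\<Sum>j\<in>Ti. phi j (hh (fst (\<mu> j)))) = (\<Sum>j\<in>Ti. phi j (hh i))"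
      by (rule sum.cong) (auto simp: Ti_def)
    also have "\<dots> \<le> Phi_n phi (card Ti) (hh i)" by (rule Phi_card[OF PS fTi Ti1 hh0])
    also have "\<dots> \<le> Phi_n phi (kk i) (hh i)"
    proof (rule Phi_mono_k[OF PS _ hh0])
      have injmu: "inj_on \<mu> S1"
      proof (rule inj_onI)
        fix x y assume x: "x \<in> S1" and y: "y \<in> S1" and e: "\<mu> x = \<mu> y"
        then have "inv pt (P x) = inv pt (P y)" unfolding \<mu>_def using inj_prod_decode
          by (metis prod_decode_inverse)
        then have "pt (inv pt (P x)) = pt (inv pt (P y))" by simp
        moreover have "P x \<in> range pt" "P y \<in> range pt" using x y by (auto simp: S1_def)
        ultimately have "P x = P y" by (simp add: f_inv_into_f)
        then show "x = y" using P x y S1S by (auto dest: inj_onD)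
      qed
      have "inj_on (\<lambda>j. snd (\<mu> j)) Ti"
      proof (rule inj_onI)
        fix x y assume x: "x \<in> Ti" and y: "y \<in> Ti" and e: "snd (\<mu> x) = snd (\<mu> y)"
        then have "\<mu> x = \<mu> y" by (auto simp: Ti_def prod_eq_iff)
        then show "x = y" using injmu x y by (auto simp: Ti_def dest: inj_onD)
      qed
      moreover have "(\<lambda>j. snd (\<mu> j)) ` Ti \<subseteq> {..<kk i}" by (auto simp: Ti_def S1_def)
      ultimately have "card Ti \<le> card {..<kk i}" by (intro card_inj_on_le) auto
      then show "card Ti \<le> kk i" by simp
    qed
    finally show "(\<Sum>j\<in>{j. j \<in> S1 \<and> fst (\<mu> j) = i}. phi j (hh (fst (\<mu> j)))) \<le> Phi_n phi (kk i) (hh i)"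
      by (simp add: Ti_def)
  qed
  also have "\<dots> \<le> (\<Sum>i. Phi_n phi (kk i) (hh i))"
    using sm fS1 by (intro sum_le_suminf) (auto intro!: Phi_nonneg[OF PS] hh0)
  finally show ?thesis .
qed

lemma ups_lower:
  assumes p: "1 \<le> p" and hh0: "\<And>i. 0 \<le> hh i"
  shows "ereal (real (kk i) powr (1 / p) * hh i) \<le> upsilon_p p (kk i) (spk kk hh)"
proof -
  define k where "k = kk i"
  define m where "m j = prod_encode (i, j - 1)" for j
  define A where "A j = (pt (m j) + pt (Suc (m j))) / 2" for j
  define B where "B j = pt (m j)" for j
  have fB: "spk kk hh (B j) = hh i" if "j \<in> {1..k}" for j
    using that unfolding B_def m_def k_def spk_pt by auto
  have fA: "spk kk hh (A j) = 0" for j unfolding A_def by (rule spk_mid)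
  have AB: "pt (Suc (m j)) < A j" "A j < B j" for j
    using pt_strict[of "m j" "Suc (m j)"] by (auto simp: A_def B_def)
  have ov: "nonoverlapping k A B"
    unfolding nonoverlapping_def
  proof (intro conjI ballI impI)
    fix j assume "j \<in> {1..k}"
    show "0 \<le> A j" using AB(1)[of j] pt_pos(1)[of "Suc (m j)"] by linarith
    show "A j \<le> B j" using AB(2)[of j] by linarith
    show "B j \<le> 1" using pt_pos(2) by (simp add: B_def)
  next
    fix j j' assume j: "j \<in> {1..k}" and j': "j' \<in> {1..k}" and ne: "j \<noteq> j'"
    have "m j \<noteq> m j'" using j j' ne by (auto simp: m_def)
    then consider "m j < m j'" | "m j' < m j" by linarith
    then show "B j \<le> A j' \<or> B j' \<le> A j"
    proof cases
      case 1
      then have "B j' \<le> pt (Suc (m j))" unfolding B_def by (intro pt_mono) simp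
      then show ?thesis using AB(1)[of j] by simp
    next
      case 2
      then have "B j \<le> pt (Suc (m j'))" unfolding B_def by (intro pt_mono) simp
      then show ?thesis using AB(1)[of j'] by simp
    qed
  qed
  have "(\<Sum>j=1..k. \<bar>spk kk hh (B j) - spk kk hh (A j)\<bar> powr p) = (\<Sum>j=1..k. hh i powr p)"
    using fA fB hh0 by (intro sum.cong) auto
  also have "\<dots> = real k * hh i powr p" by simp
  finally have sum_eq: "(\<Sum>j=1..k. \<bar>spk kk hh (B j) - spk kk hh (A j)\<bar> powr p) = real k * hh i powr p" .
  have "(real k * hh i powr p) powr (1 / p) = real k powr (1 / p) * (hh i powr p) powr (1 / p)"
    by (rule powr_mult)
  also have "\<dots> = real k powr (1 / p) * hh i" using p hh0[of i] by (simp add: powr_powr)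
  finally have e: "(real k * hh i powr p) powr (1 / p) = real k powr (1 / p) * hh i" .
  have "ereal ((\<Sum>j=1..k. \<bar>spk kk hh (B j) - spk kk hh (A j)\<bar> powr p) powr (1 / p)) \<le> upsilon_p p k (spk kk hh)"
    unfolding upsilon_p_def by (rule SUP_upper2[of "(A, B)"]) (use ov in auto)
  then have "ereal (real k powr (1 / p) * hh i) \<le> upsilon_p p k (spk kk hh)" unfolding sum_eq e .
  then show ?thesis by (simp add: k_def)
qed

lemma nec:
  assumes PS: "Phi_sequence phi" and p: "1 \<le> p" and nu: "modulus_of_variation nu"
    and hyp: "\<And>B. \<exists>k\<ge>1. B * nu k < real k powr (1 / p) * Phi_n_inv phi k 1"
  shows "\<exists>f. f \<in> PhiBV phi \<and> f \<notin> V_p p nu"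
proof -
  have "\<forall>i. \<exists>k\<ge>1. 4 ^ i * nu k < real k powr (1 / p) * Phi_n_inv phi k 1"
    using hyp by blast
  then obtain kk where kk: "\<And>i. kk i \<ge> 1"
    "\<And>i. 4 ^ i * nu (kk i) < real (kk i) powr (1 / p) * Phi_n_inv phi (kk i) 1"
    by metis
  define a where "a i = Phi_n_inv phi (kk i) 1" for i
  have a: "0 < a i" "Phi_n phi (kk i) (a i) = 1" for i using Phi_inv[OF PS kk(1)[of i]] by (auto simp: a_def)
  define hh where "hh i = (1 / 2) ^ i * a i" for i
  have hh0: "0 \<le> hh i" for i using a(1)[of i] by (simp add: hh_def)
  have Pb: "Phi_n phi (kk i) (hh i) \<le> (1 / 2) ^ i" for i
  proof -
    have "Phi_n phi (kk i) (hh i) \<le> (1 / 2) ^ i * Phi_n phi (kk i) (a i)"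
      unfolding hh_def using a(1)[of i] by (intro Phi_cvx[OF PS]) (auto simp: power_le_one)
    then show ?thesis using a(2)[of i] by simp
  qed
  have sm: "summable (\<lambda>i. Phi_n phi (kk i) (hh i))"
  proof (rule summable_comparison_test')
    show "summable (\<lambda>i. (1 / 2 :: real) ^ i)" by (rule summable_geometric) simp
    fix i :: nat
    show "norm (Phi_n phi (kk i) (hh i)) \<le> (1 / 2) ^ i"
      using Pb[of i] Phi_nonneg[OF PS hh0[of i], of "kk i"] by simp
  qed
  define T where "T = (\<Sum>i. Phi_n phi (kk i) (hh i))"
  define f where "f = spk kk hh"
  have f0: "\<And>t. 0 \<le> f t" unfolding f_def using hh0 by (intro spk_nonneg)
  have ib: "\<And>S P. finite S \<Longrightarrow> S \<subseteq> {1..} \<Longrightarrow> inj_on P S \<Longrightarrow> (\<Sum>j\<in>S. phi j (f (P j))) \<le> T"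
    unfolding f_def T_def using spk_inj_bound[OF PS hh0 sm] by blast
  have "Var_Phi phi (\<lambda>x. 1 * f x) \<le> ereal (2 * T)"
    unfolding Var_Phi_def
  proof (rule SUP_least, clarify)
    fix n a b assume "nonoverlapping n a b"
    from spike_var[OF PS f0 ib this]
    show "ereal (\<Sum>j=1..n. phi j \<bar>1 * f (b j) - 1 * f (a j)\<bar>) \<le> ereal (2 * T)" by simp
  qed
  then have "Var_Phi phi (\<lambda>x. 1 * f x) < \<infinity>" using le_less_trans[of _ "ereal (2 * T)" "\<infinity>"] by simp
  then have fin: "f \<in> PhiBV phi" unfolding PhiBV_def by (intro CollectI exI[of _ 1]) simp
  define Z where "Z = (SUP n\<in>{1..}. upsilon_p p n f / ereal (nu n))"
  have Zge: "ereal (2 ^ i) \<le> Z" for i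
  proof -
    have nup: "0 < nu (kk i)" using nu_pos[OF nu kk(1)] .
    have "2 ^ i * nu (kk i) = (1/2)^i * (4 ^ i * nu (kk i))"
      by (simp add: power_divide field_simps flip: power_mult_distrib)
    also have "\<dots> \<le> (1/2)^i * (real (kk i) powr (1 / p) * a i)"
      using kk(2)[of i] by (intro mult_left_mono) (auto simp: a_def less_imp_le)
    also have "\<dots> = real (kk i) powr (1 / p) * hh i" by (simp add: hh_def)
    finally have "ereal (2 ^ i * nu (kk i)) \<le> upsilon_p p (kk i) f"
      using ups_lower[OF p hh0, of kk i] unfolding f_def by (meson ereal_less_eq(3) order_trans)
    then have "ereal (2 ^ i * nu (kk i)) / ereal (nu (kk i)) \<le> upsilon_p p (kk i) f / ereal (nu (kk i))"
      using nup by (intro ereal_divide_right_mono) auto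
    then have "ereal (2 ^ i) \<le> upsilon_p p (kk i) f / ereal (nu (kk i))" using nup by simp
    also have "\<dots> \<le> Z" unfolding Z_def by (rule SUP_upper) (use kk(1) in simp)
    finally show ?thesis .
  qed
  have "\<not> Z < \<infinity>"
  proof
    assume "Z < \<infinity>"
    moreover have "Z \<noteq> -\<infinity>" using Zge[of 0] by auto
    ultimately obtain s where s: "Z = ereal s" by (cases Z) auto
    obtain i where "s < 2 ^ i" using real_arch_pow[of 2 s] by auto
    then show False using Zge[of i] s by simp
  qed
  then have "f \<notin> V_p p nu" unfolding V_p_def Z_def by simp
  with fin show ?thesis by blast
qed

theorem theorem6p2:
  fixes phi :: "nat \<Rightarrow> real \<Rightarrow> real" and nu :: "nat \<Rightarrow> real" and p :: real
  assumes "Phi_sequence phi" and "modulus_of_variation nu" and "1 \<le> p"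
  shows "PhiBV phi \<subseteq> V_p p nu \<longleftrightarrow>
    limsup (\<lambda>n. ereal ((1 / nu n) *
      Max ((\<lambda>k. real k powr (1 / p) * Phi_n_inv phi k 1) ` {1..n}))) < \<infinity>"
proof -
  note PS = assms(1) and nu = assms(2) and p = assms(3)
  define r where "r k = real k powr (1 / p) * Phi_n_inv phi k 1" for k
  define X where "X n = ereal ((1 / nu n) * Max (r ` {1..n}))" for n
  have r0: "0 \<le> r k" if "k \<ge> 1" for k using Phi_inv[OF PS that] by (simp add: r_def)
  have Xeq: "(\<lambda>n. ereal ((1 / nu n) *
      Max ((\<lambda>k. real k powr (1 / p) * Phi_n_inv phi k 1) ` {1..n}))) = X"
    unfolding X_def r_def[abs_def] ..
  show ?thesis unfolding Xeq
  proof
    assume sub: "PhiBV phi \<subseteq> V_p p nu"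
    show "limsup X < \<infinity>"
    proof (rule ccontr)
      assume nl: "\<not> limsup X < \<infinity>"
      have hyp: "\<exists>k\<ge>1. B * nu k < r k" for B
      proof (rule ccontr)
        assume "\<not> ?thesis"
        then have h: "\<forall>k\<ge>1. r k \<le> B * nu k" by auto
        define B' where "B' = max B 0"
        have h': "r k \<le> B' * nu k" if "k \<ge> 1" for k
        proof -
          have "B * nu k \<le> B' * nu k" using nu_pos[OF nu that] by (intro mult_right_mono) (auto simp: B'_def)
          then show ?thesis using h that by fastforce
        qed
        have "eventually (\<lambda>n. X n \<le> ereal B') sequentially"
        proof (rule eventually_sequentiallyI[of 1])
          fix n :: nat assume n: "1 \<le> n"
          have nun: "0 < nu n" using nu_pos[OF nu n] .
          have "Max (r ` {1..n}) \<le> B' * nu n"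
          proof (rule Max.boundedI)
            show "finite (r ` {1..n})" by simp
            show "r ` {1..n} \<noteq> {}" using n by simp
            fix y assume "y \<in> r ` {1..n}"
            then obtain k where k: "k \<in> {1..n}" "y = r k" by auto
            have "r k \<le> B' * nu k" using h' k by simp
            also have "\<dots> \<le> B' * nu n" using nu_mono[OF nu, of k n] k by (intro mult_left_mono) (auto simp: B'_def)
            finally show "y \<le> B' * nu n" using k by simp
          qed
          then have "(1 / nu n) * Max (r ` {1..n}) \<le> B'" using nun by (simp add: field_simps)
          then show "X n \<le> ereal B'" by (simp add: X_def)
        qed
        then have "limsup X \<le> ereal B'" by (rule Limsup_bounded)
        then show False using nl by (simp add: le_less_trans)
      qed
      obtain f where "f \<in> PhiBV phi" "f \<notin> V_p p nu"
        using nec[OF PS p nu] hyp unfolding r_def by blast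
      then show False using sub by blast
    qed
  next
    assume lim: "limsup X < \<infinity>"
    obtain L where L: "limsup X < ereal L"
    proof (cases "limsup X")
      case (real x) then show ?thesis using that[of "x + 1"] by simp
    next
      case PInf then show ?thesis using lim by simp
    next
      case MInf then show ?thesis using that[of 0] by simp
    qed
    have "eventually (\<lambda>n. X n < ereal L) sequentially" using Limsup_lessD[OF L] .
    then obtain N where N: "\<And>n. n \<ge> N \<Longrightarrow> X n < ereal L" by (auto simp: eventually_sequentially)
    define D where "D = Max ((\<lambda>k. r k / nu k) ` {1..N})"
    define C where "C = max (max L D) 0"
    have C0: "0 \<le> C" by (simp add: C_def)
    have hC: "\<forall>k\<ge>1. real k powr (1 / p) * Phi_n_inv phi k 1 \<le> C * nu k"
    proof (intro allI impI)
      fix k :: nat assume k: "k \<ge> 1"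
      have nuk: "0 < nu k" using nu_pos[OF nu k] .
      have "r k \<le> C * nu k"
      proof (cases "N \<le> k")
        case True
        have "X k < ereal L" using N[OF True] .
        then have "(1 / nu k) * Max (r ` {1..k}) < L" by (simp add: X_def)
        then have "Max (r ` {1..k}) < L * nu k" using nuk by (simp add: field_simps)
        moreover have "r k \<le> Max (r ` {1..k})" using k by (intro Max_ge) auto
        moreover have "L * nu k \<le> C * nu k" using nuk by (intro mult_right_mono) (auto simp: C_def)
        ultimately show ?thesis by linarith
      next
        case False
        have "r k / nu k \<le> D" unfolding D_def using k False by (intro Max_ge) auto
        then have "r k / nu k \<le> C" by (simp add: C_def)
        then show ?thesis using nuk by (simp add: field_simps)
      qed
      then show "real k powr (1 / p) * Phi_n_inv phi k 1 \<le> C * nu k" by (simp add: r_def)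
    qed
    show "PhiBV phi \<subseteq> V_p p nu"
      using suff[OF PS p nu C0 hC] by blast
  qed
qed

end
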